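(* Let $\mathcal{X},\mathcal{Y}$ be Polish spaces, let $\mathcal{S}=\{p_1,\ldots,p_{|\mathcal{S}|}\}$ be a finite set of probability measures on $\mathcal{X}$, let $\mathcal{H}=\{h_i\}_{i=1}^M$ be a finite set of real-valued functions on the space $\mathcal{M}_1(\mathcal{X}\times\mathcal{Y})$ of joint distributions, and let $\theta\in\mathbb{R}^M$ be the associated constraint levels. Then a rate $R$ is robust one-shot achievable only if $R\ge\bar{R}(\theta)$.
   Context: A conditional distribution $Q_{Y|X}$ is a stochastic kernel from $\mathcal{X}$ to $\mathcal{Y}$; for $\mu_X\in\mathcal{M}_1(\mathcal{X})$, $\mu_XQ_{Y|X}$ denotes the induced joint law and $I(\mu_X,Q_{Y|X})$ its mutual information. The set $\mathcal{L}(\theta)$ consists of all conditional distributions $Q_{Y|X}$ such that $h_i[\mu_XQ_{Y|X}]\le\theta_i$ for all $\mu_X\in\mathcal{S}$ and all $i\in\{1,\ldots,M\}$. The robust information rate function is $\bar{R}(\theta)=\inf_{Q_{Y|X}\in\mathcal{L}(\theta)}\sup_{\mu_X\in\mathcal{S}}I(\mu_X,Q_{Y|X})$. A rate $R$ is robust one-shot achievable if there exist an encoder $f:\mathcal{X}\times\mathcal{Z}\to\mathbb{N}_0$, a decoder $g:\mathbb{N}_0\times\mathcal{Z}\to\mathcal{Y}$ and a random variable $Z$ valued in a set $\mathcal{Z}$ (common randomness, independent of the source) such that for every $\mu_X\in\mathcal{S}$, with $X\sim\mu_X$, $M=f(X,Z)$ and $Y=g(M,Z)$, one has $H(M\mid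 Z)\le R$ and the induced joint distribution $P_{X,Y}$ satisfies $h_i(P_{X,Y})\le\theta_i$ for all $i$. *)

theory Defs
  imports "HOL-Probability.Probability"
begin

definition prob_on :: "'a::topological_space measure \<Rightarrow> bool" where
  "prob_on \<mu> \<longleftrightarrow> sets \<mu> = sets borel \<and> prob_space \<mu>"

definition stoch_kernel :: "('a::topological_space \<Rightarrow> 'b::topological_space measure) \<Rightarrow> bool" where
  "stoch_kernel K \<longleftrightarrow> K \<in> borel \<rightarrow>\<^sub>M prob_algebra borel"

definition joint_law ::
  "'a::topological_space measure \<Rightarrow> ('a \<Rightarrow> 'b::topological_space measure) \<Rightarrow> ('a \<times> 'b) measure" where
  "joint_law \<mu> K = \<mu> \<bind> (\<lambda>x. distr (K x) (borel \<Otimes>\<^sub>M borel) (\<lambda>y. (x, y)))"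

text \<open>For probability
  measures, int (t ln t) dQ = int (t ln t - t + 1) dQ with t = dP/dQ, the latter
  integrand being nonnegative.\<close>
definition KL_div :: "'a measure \<Rightarrow> 'a measure \<Rightarrow> ereal" where
  "KL_div P Q =
    (if absolutely_continuous Q P
     then enn2ereal (\<integral>\<^sup>+ x. ennreal (let t = enn2real (RN_deriv Q P x) in t * ln t - t + 1) \<partial>Q)
     else \<infinity>)"

definition mutual_info ::
  "'a::topological_space measure \<Rightarrow> ('a \<Rightarrow> 'b::topological_space measure) \<Rightarrow> ereal" where
  "mutual_info \<mu> K =
     KL_div (joint_law \<mu> K) (\<mu> \<Otimes>\<^sub>M distr (joint_law \<mu> K) borel snd)"

definition constr_set ::
  "'a::topological_space measure set \<Rightarrow> nat \<Rightarrow> (nat \<Rightarrow> ('a \<times> 'b::topological_space) measure \<Rightarrow> real)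
    \<Rightarrow> (nat \<Rightarrow> real) \<Rightarrow> ('a \<Rightarrow> 'b measure) set" where
  "constr_set S M h \<theta> =
     {K. stoch_kernel K \<and> (\<forall>\<mu>\<in>S. \<forall>i<M. h i (joint_law \<mu> K) \<le> \<theta> i)}"

definition robust_rate ::
  "'a::topological_space measure set \<Rightarrow> nat \<Rightarrow> (nat \<Rightarrow> ('a \<times> 'b::topological_space) measure \<Rightarrow> real)
    \<Rightarrow> (nat \<Rightarrow> real) \<Rightarrow> ereal" where
  "robust_rate S M h \<theta> =
     (INF K \<in> (constr_set S M h \<theta> :: ('a \<Rightarrow> 'b measure) set). SUP \<mu>\<in>S. mutual_info \<mu> K)"

definition disc_entropy :: "nat measure \<Rightarrow> ennreal" where
  "disc_entropy P = (\<Sum>m. ennreal (- measure P {m} * ln (measure P {m})))"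

text \<open>H(M | Z) for M = f(X,Z) with X ~ mu independent of Z ~ PZ: the conditional law of M
  given Z = z is the law of f(X,z).\<close>
definition cond_entropy_code ::
  "'a measure \<Rightarrow> 'z measure \<Rightarrow> ('a \<Rightarrow> 'z \<Rightarrow> nat) \<Rightarrow> ennreal" where
  "cond_entropy_code \<mu> PZ f =
     (\<integral>\<^sup>+ z. disc_entropy (distr \<mu> (count_space UNIV) (\<lambda>x. f x z)) \<partial>PZ)"

definition code_joint ::
  "'a::topological_space measure \<Rightarrow> 'z measure \<Rightarrow> ('a \<Rightarrow> 'z \<Rightarrow> nat) \<Rightarrow> (nat \<Rightarrow> 'z \<Rightarrow> 'b::topological_space)
    \<Rightarrow> ('a \<times> 'b) measure" where
  "code_joint \<mu> PZ f g =
     distr (\<mu> \<Otimes>\<^sub>M PZ) (borel \<Otimes>\<^sub>M borel) (\<lambda>(x, z). (x, g (f x z) z))"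

text \<open>Robust one-shot achievability of rate R, witnessed by the common randomness
  distribution PZ (on an arbitrary measurable space), encoder f and decoder g.\<close>
definition robust_achievable_via ::
  "'a::topological_space measure set \<Rightarrow> nat \<Rightarrow> (nat \<Rightarrow> ('a \<times> 'b::topological_space) measure \<Rightarrow> real)
    \<Rightarrow> (nat \<Rightarrow> real) \<Rightarrow> real \<Rightarrow> 'z measure \<Rightarrow> ('a \<Rightarrow> 'z \<Rightarrow> nat) \<Rightarrow> (nat \<Rightarrow> 'z \<Rightarrow> 'b) \<Rightarrow> bool" where
  "robust_achievable_via S M h \<theta> R PZ f g \<longleftrightarrow>
     prob_space PZ \<and>
     (\<lambda>(x, z). f x z) \<in> (borel \<Otimes>\<^sub>M PZ) \<rightarrow>\<^sub>M count_space UNIV \<and>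
     (\<lambda>(m, z). g m z) \<in> (count_space UNIV \<Otimes>\<^sub>M PZ) \<rightarrow>\<^sub>M borel \<and>
     (\<forall>\<mu>\<in>S. enn2ereal (cond_entropy_code \<mu> PZ f) \<le> ereal R \<and>
             (\<forall>i<M. h i (code_joint \<mu> PZ f g) \<le> \<theta> i))"

end

theory Submission
  imports Defs
begin


definition phi :: "real \<Rightarrow> real" where "phi t = t * ln t - t + 1"

lemma phi_nonneg: "0 \<le> t \<Longrightarrow> 0 \<le> phi t"
proof (cases "t = 0")
  case False
  assume "0 \<le> t" then have t: "0 < t" using False by simp
  have "ln (1/t) \<le> 1/t - 1" using t by (intro ln_le_minus_one) simp
  then have "- ln t \<le> 1/t - 1" using t by (simp add: ln_div)
  then have "t * (- ln t) \<le> t * (1/t - 1)" using t by (intro mult_left_mono) auto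
  also have "t * (1/t - 1) = 1 - t" using t by (simp add: right_diff_distrib)
  finally show ?thesis by (simp add: phi_def)
qed (simp add: phi_def)

lemma phi_tangent:
  assumes s: "0 \<le> s" and c: "0 < c"
  shows "phi c + ln c * (s - c) \<le> phi s"
proof (cases "s = 0")
  case True then show ?thesis using c by (simp add: phi_def)
next
  case False
  then have s: "0 < s" using s by simp
  have "ln (c/s) \<le> c/s - 1" using s c by (intro ln_le_minus_one) simp
  then have "ln c - ln s \<le> c/s - 1" using s c by (simp add: ln_div)
  then have "s * (ln c - ln s) \<le> s * (c/s - 1)" using s by (intro mult_left_mono) auto
  also have "s * (c/s - 1) = c - s" using s by (simp add: right_diff_distrib)
  finally have "s * ln c - s * ln s \<le> c - s" by (simp add: right_diff_distrib)
  then show ?thesis by (simp add: phi_def algebra_simps)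
qed

lemma key_pw:
  assumes s: "0 \<le> (s::real)" and b: "0 \<le> (b::real)" and z: "b = 0 \<longrightarrow> s = 0" and n: "1 \<le> (n::real)"
  defines "c \<equiv> min b n"
  shows "(phi c + ln c * (b - c)) + max (ln c) 0 * s + max (- ln c) 0 * b
     \<le> phi s + max (ln c) 0 * b + max (- ln c) 0 * s"
proof (cases "b = 0")
  case True then show ?thesis using z n by (simp add: c_def phi_def)
next
  case False
  then have c: "0 < c" using b n by (simp add: c_def)
  have "phi c + ln c * (s - c) \<le> phi s" by (rule phi_tangent[OF s c])
  moreover have "ln c = max (ln c) 0 - max (- ln c) 0" by simp
  ultimately show ?thesis by (smt (verit) left_diff_distrib right_diff_distrib)
qed

lemma L_nonneg:
  assumes b: "0 \<le> (b::real)" and n: "1 \<le> (n::real)"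
  shows "0 \<le> phi (min b n) + ln (min b n) * (b - min b n)"
proof (cases "b \<le> n")
  case True then show ?thesis using phi_nonneg b by simp
next
  case False
  then have "min b n = n" by (simp add: min_def)
  moreover have "0 \<le> ln n" using n by (simp add: ln_ge_zero)
  moreover have "0 \<le> phi n" using n by (intro phi_nonneg) simp
  ultimately show ?thesis using False by simp
qed

lemma lm_bound:
  assumes b: "0 \<le> (b::real)" and n: "1 \<le> (n::real)"
  shows "max (- ln (min b n)) 0 * b \<le> 1"
proof (cases "b \<le> n")
  case False
  then have "min b n = n" by (simp add: min_def)
  moreover have "0 \<le> ln n" using n by (simp add: ln_ge_zero)
  ultimately show ?thesis by (simp add: max_def)
next
  case True
  show ?thesis
  proof (cases "b = 0")
    case False
    then have b': "0 < b" using b by simp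
    have "ln (1/b) \<le> 1/b - 1" using b' by (intro ln_le_minus_one) simp
    then have "- ln b \<le> 1/b - 1" using b' by (simp add: ln_div)
    then have "b * (- ln b) \<le> b * (1/b - 1)" using b' by (intro mult_left_mono) auto
    also have "b * (1/b - 1) = 1 - b" using b' by (simp add: right_diff_distrib)
    finally have "b * (- ln b) \<le> 1" using b' by simp
    then show ?thesis using True b' by (simp add: max_def mult.commute)
  qed simp
qed

lemma phi_meas[measurable]: "phi \<in> borel_measurable borel"
  unfolding phi_def by measurable

lemma phi_inv: "0 < (p::real) \<Longrightarrow> (phi (1/p) * p + (1 - p)) * p = - p * ln p"
  by (simp add: phi_def ln_div algebra_simps)

lemma nn_integral_nat_valued:
  fixes F :: "'a \<Rightarrow> nat"
  assumes F: "F \<in> M \<rightarrow>\<^sub>M count_space UNIV"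
  shows "(\<integral>\<^sup>+x. w (F x) \<partial>M) = (\<Sum>m. w m * emeasure M (F -` {m} \<inter> space M))"
proof -
  have "(\<integral>\<^sup>+x. w (F x) \<partial>M) = (\<integral>\<^sup>+x. (\<Sum>m. w m * indicator (F -` {m} \<inter> space M) x) \<partial>M)"
  proof (intro nn_integral_cong)
    fix x assume x: "x \<in> space M"
    have "(\<lambda>m. w m * indicator (F -` {m} \<inter> space M) x) = (\<lambda>m. if m = F x then w (F x) else 0)"
      using x by (auto simp: indicator_def)
    then show "w (F x) = (\<Sum>m. w m * indicator (F -` {m} \<inter> space M) x)"
      using sums_single[of "F x" "\<lambda>_. w (F x)"] by (simp add: sums_iff)
  qed
  also have "\<dots> = (\<Sum>m. \<integral>\<^sup>+x. w m * indicator (F -` {m} \<inter> space M) x \<partial>M)"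
  proof (rule nn_integral_suminf)
    fix m
    have "F -` {m} \<inter> space M \<in> sets M" using F by (rule measurable_sets) simp
    then show "(\<lambda>x. w m * indicator (F -` {m} \<inter> space M) x) \<in> borel_measurable M" by measurable
  qed
  also have "\<dots> = (\<Sum>m. w m * emeasure M (F -` {m} \<inter> space M))"
    using F by (simp add: nn_integral_cmult_indicator measurable_sets)
  finally show ?thesis .
qed




lemma dpi:
  fixes Q :: "'w measure" and N :: "'v measure" and T :: "'w \<Rightarrow> 'v" and s :: "'w \<Rightarrow> real"
  assumes Q: "prob_space Q" and T[measurable]: "T \<in> Q \<rightarrow>\<^sub>M N"
    and s[measurable]: "s \<in> borel_measurable Q" and s0: "\<And>\<omega>. \<omega> \<in> space Q \<Longrightarrow> 0 \<le> s \<omega>"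
    and sfin: "(\<integral>\<^sup>+\<omega>. ennreal (s \<omega>) \<partial>Q) \<noteq> \<infinity>"
  shows "KL_div (distr (density Q (\<lambda>\<omega>. ennreal (s \<omega>))) N T) (distr Q N T)
           \<le> enn2ereal (\<integral>\<^sup>+\<omega>. ennreal (phi (s \<omega>)) \<partial>Q)"
proof -
  interpret Q: prob_space Q by fact
  define Q' where "Q' = distr Q N T"
  define P' where "P' = distr (density Q (\<lambda>\<omega>. ennreal (s \<omega>))) N T"
  interpret Q': prob_space Q' unfolding Q'_def by (rule Q.prob_space_distr) simp
  have setsQ': "sets Q' = sets N" and setsP': "sets P' = sets N"
    by (simp_all add: Q'_def P'_def)
  have ac: "absolutely_continuous Q' P'"
    unfolding absolutely_continuous_def
  proof
    fix A assume A: "A \<in> null_sets Q'"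
    then have As: "A \<in> sets N" using setsQ' by (auto simp: null_sets_def)
    have "T -` A \<inter> space Q \<in> null_sets Q"
      using A As by (auto simp: Q'_def null_sets_def emeasure_distr)
    then have "AE \<omega> in Q. \<omega> \<notin> T -` A \<inter> space Q" by (rule AE_not_in)
    then have "AE \<omega> in Q. \<omega> \<in> T -` A \<inter> space Q \<longrightarrow> ennreal (s \<omega>) = 0"
      by eventually_elim auto
    then have "T -` A \<inter> space Q \<in> null_sets (density Q (\<lambda>\<omega>. ennreal (s \<omega>)))"
      using As by (subst null_sets_density_iff) auto
    then show "A \<in> null_sets P'"
      using As by (auto simp: P'_def null_sets_def emeasure_distr)
  qed
  have "emeasure P' (space P') = (\<integral>\<^sup>+\<omega>. ennreal (s \<omega>) \<partial>Q)"
  proof -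
    have "emeasure P' (space P') = emeasure (density Q (\<lambda>\<omega>. ennreal (s \<omega>))) (space Q)"
    proof -
      have "T -` space N \<inter> space Q = space Q" using measurable_space[OF T] by auto
      then show ?thesis by (simp add: P'_def emeasure_distr)
    qed
    also have "\<dots> = (\<integral>\<^sup>+\<omega>. ennreal (s \<omega>) \<partial>Q)"
      by (simp add: emeasure_density)
    finally show ?thesis .
  qed
  then have finP': "finite_measure P'"
    using sfin by (intro finite_measureI) simp
  have sfP': "sigma_finite_measure P'"
    using finP' by (simp add: finite_measure.axioms(1))
  define \<rho> where "\<rho> = RN_deriv Q' P'"
  have dens: "density Q' \<rho> = P'"
    unfolding \<rho>_def using ac setsP' setsQ' by (intro Q'.density_RN_deriv) auto
  have \<rho>m[measurable]: "\<rho> \<in> borel_measurable N"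
    unfolding \<rho>_def by (subst measurable_cong_sets[OF setsQ'[symmetric] refl]) simp
  have fin: "AE y in Q'. \<rho> y \<noteq> \<infinity>"
    unfolding \<rho>_def using ac setsP' setsQ' sfP' by (intro Q'.RN_deriv_finite) auto
  define r where "r y = enn2real (\<rho> y)" for y
  have rm[measurable]: "r \<in> borel_measurable N" unfolding r_def by measurable
  define b where "b \<omega> = r (T \<omega>)" for \<omega>
  have bm[measurable]: "b \<in> borel_measurable Q" unfolding b_def by measurable
  have b0: "0 \<le> b \<omega>" for \<omega> by (simp add: b_def r_def)
  have AEb: "AE \<omega> in Q. ennreal (b \<omega>) = \<rho> (T \<omega>)"
  proof -
    have "AE \<omega> in Q. \<rho> (T \<omega>) \<noteq> \<infinity>"
      using fin unfolding Q'_def by (subst (asm) AE_distr_iff) auto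
    then show ?thesis by eventually_elim (simp add: b_def r_def less_top)
  qed
  have ident: "(\<integral>\<^sup>+\<omega>. w (T \<omega>) * ennreal (s \<omega>) \<partial>Q) = (\<integral>\<^sup>+\<omega>. w (T \<omega>) * ennreal (b \<omega>) \<partial>Q)"
    if wm[measurable]: "w \<in> borel_measurable N" for w
  proof -
    have "(\<integral>\<^sup>+\<omega>. w (T \<omega>) * ennreal (s \<omega>) \<partial>Q) = (\<integral>\<^sup>+y. w y \<partial>P')"
      by (simp add: P'_def nn_integral_distr nn_integral_density mult.commute)
    also have "\<dots> = (\<integral>\<^sup>+y. \<rho> y * w y \<partial>Q')"
      by (simp add: dens[symmetric] nn_integral_density measurable_cong_sets[OF setsQ' refl])
    also have "\<dots> = (\<integral>\<^sup>+\<omega>. \<rho> (T \<omega>) * w (T \<omega>) \<partial>Q)"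
      by (simp add: Q'_def nn_integral_distr)
    also have "\<dots> = (\<integral>\<^sup>+\<omega>. w (T \<omega>) * ennreal (b \<omega>) \<partial>Q)"
      using AEb by (intro nn_integral_cong_AE) (auto simp: mult.commute)
    finally show ?thesis .
  qed

  have sb: "(\<integral>\<^sup>+\<omega>. ennreal (b \<omega>) \<partial>Q) = (\<integral>\<^sup>+\<omega>. ennreal (s \<omega>) \<partial>Q)"
    using ident[of "\<lambda>_. 1"] by simp
  have AE0: "AE \<omega> in Q. b \<omega> = 0 \<longrightarrow> s \<omega> = 0"
  proof -
    define Z where "Z = {y \<in> space N. r y = 0}"
    have Zs[measurable]: "Z \<in> sets N" unfolding Z_def by measurable
    have "(\<integral>\<^sup>+\<omega>. indicator Z (T \<omega>) * ennreal (s \<omega>) \<partial>Q) = (\<integral>\<^sup>+\<omega>. indicator Z (T \<omega>) * ennreal (b \<omega>) \<partial>Q)"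
      by (rule ident) measurable
    also have "\<dots> = (\<integral>\<^sup>+\<omega>. 0 \<partial>Q)"
      by (intro nn_integral_cong) (auto simp: Z_def b_def indicator_def)
    finally have "(\<integral>\<^sup>+\<omega>. indicator Z (T \<omega>) * ennreal (s \<omega>) \<partial>Q) = 0" by simp
    then have "AE \<omega> in Q. indicator Z (T \<omega>) * ennreal (s \<omega>) = 0"
      by (subst (asm) nn_integral_0_iff_AE) auto
    then show ?thesis
    proof (rule AE_mp, intro AE_I2 impI)
      fix \<omega> assume \<omega>: "\<omega> \<in> space Q" and e: "indicator Z (T \<omega>) * ennreal (s \<omega>) = 0" and b: "b \<omega> = 0"
      have "T \<omega> \<in> Z" using \<omega> b measurable_space[OF T \<omega>] by (simp add: Z_def b_def)
      then have "ennreal (s \<omega>) = 0" using e by simp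
      then show "s \<omega> = 0" using s0[OF \<omega>] by simp
    qed
  qed
  define n where "n k = real k + 1" for k :: nat
  have n1: "1 \<le> n k" for k by (simp add: n_def)
  define c where "c k \<omega> = min (b \<omega>) (n k)" for k \<omega>
  define L where "L k \<omega> = phi (c k \<omega>) + ln (c k \<omega>) * (b \<omega> - c k \<omega>)" for k \<omega>
  define lp where "lp k y = max (ln (min (r y) (n k))) 0" for k y
  define lm where "lm k y = max (- ln (min (r y) (n k))) 0" for k y
  have [measurable]: "lp k \<in> borel_measurable N" "lm k \<in> borel_measurable N" for k
    unfolding lp_def lm_def by measurable
  have [measurable]: "L k \<in> borel_measurable Q" for k
    unfolding L_def c_def phi_def by measurable
  have lpc: "lp k (T \<omega>) = max (ln (c k \<omega>)) 0" "lm k (T \<omega>) = max (- ln (c k \<omega>)) 0" for k \<omega>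
    by (simp_all add: lp_def lm_def c_def b_def)
  have lp0: "0 \<le> lp k y" "0 \<le> lm k y" for k y by (simp_all add: lp_def lm_def)
  have bound: "(\<integral>\<^sup>+\<omega>. ennreal (L k \<omega>) \<partial>Q) \<le> (\<integral>\<^sup>+\<omega>. ennreal (phi (s \<omega>)) \<partial>Q)" for k
  proof -
    have A: "(\<integral>\<^sup>+\<omega>. ennreal (lp k (T \<omega>) * s \<omega>) \<partial>Q) = (\<integral>\<^sup>+\<omega>. ennreal (lp k (T \<omega>) * b \<omega>) \<partial>Q)"
      using ident[of "\<lambda>y. ennreal (lp k y)"] lp0 s0 b0
      by (simp add: ennreal_mult'' nn_integral_cong[of Q "\<lambda>\<omega>. ennreal (lp k (T \<omega>) * s \<omega>)"])
    have B: "(\<integral>\<^sup>+\<omega>. ennreal (lm k (T \<omega>) * s \<omega>) \<partial>Q) = (\<integral>\<^sup>+\<omega>. ennreal (lm k (T \<omega>) * b \<omega>) \<partial>Q)"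
      using ident[of "\<lambda>y. ennreal (lm k y)"] lp0 s0 b0
      by (simp add: ennreal_mult'' nn_integral_cong[of Q "\<lambda>\<omega>. ennreal (lm k (T \<omega>) * s \<omega>)"])
    have Afin: "(\<integral>\<^sup>+\<omega>. ennreal (lp k (T \<omega>) * b \<omega>) \<partial>Q) \<noteq> \<infinity>"
    proof -
      have "(\<integral>\<^sup>+\<omega>. ennreal (lp k (T \<omega>) * b \<omega>) \<partial>Q) \<le> (\<integral>\<^sup>+\<omega>. ennreal (ln (n k)) * ennreal (b \<omega>) \<partial>Q)"
      proof (intro nn_integral_mono)
        fix \<omega>
        have "lp k (T \<omega>) \<le> ln (n k)"
        proof (cases "c k \<omega> = 0")
          case True then show ?thesis using n1[of k] by (simp add: lpc ln_ge_zero)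
        next
          case False
          then have "0 < c k \<omega>" using b0[of \<omega>] n1[of k] by (simp add: c_def)
          moreover have "c k \<omega> \<le> n k" by (simp add: c_def)
          ultimately have "ln (c k \<omega>) \<le> ln (n k)" by simp
          then show ?thesis using n1[of k] by (simp add: lpc ln_ge_zero)
        qed
        then show "ennreal (lp k (T \<omega>) * b \<omega>) \<le> ennreal (ln (n k)) * ennreal (b \<omega>)"
          using b0[of \<omega>] n1[of k] by (simp add: ennreal_mult''[symmetric] ln_ge_zero ennreal_leI mult_right_mono)
      qed
      also have "\<dots> = ennreal (ln (n k)) * (\<integral>\<^sup>+\<omega>. ennreal (b \<omega>) \<partial>Q)"
        by (rule nn_integral_cmult) measurable
      also have "\<dots> < \<infinity>" using sfin sb by (simp add: ennreal_mult_less_top less_top)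
      finally show ?thesis by simp
    qed
    have Bfin: "(\<integral>\<^sup>+\<omega>. ennreal (lm k (T \<omega>) * s \<omega>) \<partial>Q) \<noteq> \<infinity>"
    proof -
      have "(\<integral>\<^sup>+\<omega>. ennreal (lm k (T \<omega>) * b \<omega>) \<partial>Q) \<le> (\<integral>\<^sup>+\<omega>. 1 \<partial>Q)"
        using lm_bound[OF b0 n1] by (intro nn_integral_mono) (simp add: lpc c_def)
      also have "\<dots> = 1" by (simp add: Q.emeasure_space_1)
      finally show ?thesis using B by (auto simp: top_unique)
    qed
    have pw: "AE \<omega> in Q. ennreal (L k \<omega>) + (ennreal (lp k (T \<omega>) * s \<omega>) + ennreal (lm k (T \<omega>) * b \<omega>))
       \<le> ennreal (phi (s \<omega>)) + (ennreal (lp k (T \<omega>) * b \<omega>) + ennreal (lm k (T \<omega>) * s \<omega>))"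
      using AE0
    proof (rule AE_mp, intro AE_I2 impI)
      fix \<omega> assume \<omega>: "\<omega> \<in> space Q" and z: "b \<omega> = 0 \<longrightarrow> s \<omega> = 0"
      have le: "L k \<omega> + lp k (T \<omega>) * s \<omega> + lm k (T \<omega>) * b \<omega>
          \<le> phi (s \<omega>) + lp k (T \<omega>) * b \<omega> + lm k (T \<omega>) * s \<omega>"
        using key_pw[OF s0[OF \<omega>] b0 z n1] by (simp add: L_def lpc c_def)
      have nn: "0 \<le> L k \<omega>" "0 \<le> lp k (T \<omega>) * s \<omega>" "0 \<le> lm k (T \<omega>) * b \<omega>"
        "0 \<le> phi (s \<omega>)" "0 \<le> lp k (T \<omega>) * b \<omega>" "0 \<le> lm k (T \<omega>) * s \<omega>"
        using L_nonneg[OF b0 n1] lp0 s0[OF \<omega>] b0 phi_nonneg[OF s0[OF \<omega>]]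
        by (simp_all add: L_def c_def)
      show "ennreal (L k \<omega>) + (ennreal (lp k (T \<omega>) * s \<omega>) + ennreal (lm k (T \<omega>) * b \<omega>))
       \<le> ennreal (phi (s \<omega>)) + (ennreal (lp k (T \<omega>) * b \<omega>) + ennreal (lm k (T \<omega>) * s \<omega>))"
        using le nn by (simp add: ennreal_plus[symmetric] add.assoc del: ennreal_plus)
    qed
    have "(\<integral>\<^sup>+\<omega>. ennreal (L k \<omega>) \<partial>Q) + ((\<integral>\<^sup>+\<omega>. ennreal (lp k (T \<omega>) * s \<omega>) \<partial>Q) + (\<integral>\<^sup>+\<omega>. ennreal (lm k (T \<omega>) * b \<omega>) \<partial>Q))
       = (\<integral>\<^sup>+\<omega>. ennreal (L k \<omega>) + (ennreal (lp k (T \<omega>) * s \<omega>) + ennreal (lm k (T \<omega>) * b \<omega>)) \<partial>Q)"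
      by (simp add: nn_integral_add)
    also have "\<dots> \<le> (\<integral>\<^sup>+\<omega>. ennreal (phi (s \<omega>)) + (ennreal (lp k (T \<omega>) * b \<omega>) + ennreal (lm k (T \<omega>) * s \<omega>)) \<partial>Q)"
      by (rule nn_integral_mono_AE[OF pw])
    also have "\<dots> = (\<integral>\<^sup>+\<omega>. ennreal (phi (s \<omega>)) \<partial>Q) + ((\<integral>\<^sup>+\<omega>. ennreal (lp k (T \<omega>) * b \<omega>) \<partial>Q) + (\<integral>\<^sup>+\<omega>. ennreal (lm k (T \<omega>) * s \<omega>) \<partial>Q))"
      unfolding phi_def by (simp add: nn_integral_add)
    finally show ?thesis using A B Afin Bfin
      by (simp add: add.commute[of "\<integral>\<^sup>+ \<omega>. ennreal (L k \<omega>) \<partial>Q"] add.commute[of "\<integral>\<^sup>+ \<omega>. ennreal (phi (s \<omega>)) \<partial>Q"] ennreal_add_left_cancel_le)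
  qed
  have lim: "(\<integral>\<^sup>+\<omega>. ennreal (phi (b \<omega>)) \<partial>Q) = (\<integral>\<^sup>+\<omega>. liminf (\<lambda>k. ennreal (L k \<omega>)) \<partial>Q)"
  proof (intro nn_integral_cong)
    fix \<omega>
    have ev: "eventually (\<lambda>k. ennreal (L k \<omega>) = ennreal (phi (b \<omega>))) sequentially"
    proof (rule eventually_sequentiallyI[of "nat \<lceil>b \<omega>\<rceil>"])
      fix k assume "nat \<lceil>b \<omega>\<rceil> \<le> k"
      then have "b \<omega> \<le> n k" unfolding n_def by linarith
      then show "ennreal (L k \<omega>) = ennreal (phi (b \<omega>))" by (simp add: L_def c_def)
    qed
    have "(\<lambda>k. ennreal (L k \<omega>)) \<longlonglongrightarrow> ennreal (phi (b \<omega>))"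
      by (rule tendsto_eventually) (rule ev)
    then show "ennreal (phi (b \<omega>)) = liminf (\<lambda>k. ennreal (L k \<omega>))"
      by (simp add: lim_imp_Liminf)
  qed
  also have "\<dots> \<le> liminf (\<lambda>k. \<integral>\<^sup>+\<omega>. ennreal (L k \<omega>) \<partial>Q)"
    by (rule nn_integral_liminf) measurable
  also have "\<dots> \<le> limsup (\<lambda>k. \<integral>\<^sup>+\<omega>. ennreal (L k \<omega>) \<partial>Q)"
    by (rule Liminf_le_Limsup) simp
  also have "\<dots> \<le> (\<integral>\<^sup>+\<omega>. ennreal (phi (s \<omega>)) \<partial>Q)"
    by (rule Limsup_bounded) (simp add: bound)
  finally have main: "(\<integral>\<^sup>+\<omega>. ennreal (phi (b \<omega>)) \<partial>Q) \<le> (\<integral>\<^sup>+\<omega>. ennreal (phi (s \<omega>)) \<partial>Q)" .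
  have "KL_div P' Q' = enn2ereal (\<integral>\<^sup>+y. ennreal (phi (r y)) \<partial>Q')"
    using ac by (simp add: KL_div_def phi_def r_def \<rho>_def Let_def)
  also have "(\<integral>\<^sup>+y. ennreal (phi (r y)) \<partial>Q') = (\<integral>\<^sup>+\<omega>. ennreal (phi (b \<omega>)) \<partial>Q)"
    unfolding Q'_def b_def by (subst nn_integral_distr) (auto simp: phi_def)
  finally show ?thesis using main by (simp add: P'_def Q'_def less_eq_ennreal.rep_eq)
qed




definition Kc :: "'z measure \<Rightarrow> ('a \<Rightarrow> 'z \<Rightarrow> nat) \<Rightarrow> (nat \<Rightarrow> 'z \<Rightarrow> 'b::topological_space) \<Rightarrow> 'a \<Rightarrow> 'b measure" where
  "Kc PZ f g x = distr PZ borel (\<lambda>z. g (f x z) z)"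

locale cs =
  fixes \<mu> :: "'a::topological_space measure" and PZ :: "'z measure"
    and f :: "'a \<Rightarrow> 'z \<Rightarrow> nat" and g :: "nat \<Rightarrow> 'z \<Rightarrow> 'b::topological_space"
  assumes mu: "prob_space \<mu>" and mu_sets: "sets \<mu> = sets borel"
    and PZ: "prob_space PZ"
    and fm0: "(\<lambda>(x, z). f x z) \<in> (borel \<Otimes>\<^sub>M PZ) \<rightarrow>\<^sub>M count_space UNIV"
    and gm0: "(\<lambda>(m, z). g m z) \<in> (count_space UNIV \<Otimes>\<^sub>M PZ) \<rightarrow>\<^sub>M borel"
begin

sublocale M: prob_space \<mu> by (rule mu)
sublocale P: prob_space PZ by (rule PZ)
sublocale MP: pair_sigma_finite \<mu> PZ ..
lemma MP_prob: "prob_space (\<mu> \<Otimes>\<^sub>M PZ)" by (rule prob_space_pair) unfold_locales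
lemma MP_sf: "sigma_finite_measure (\<mu> \<Otimes>\<^sub>M PZ)" by (rule prob_space_imp_sigma_finite[OF MP_prob])

lemma space_mu[simp]: "space \<mu> = UNIV"
  using sets_eq_imp_space_eq[OF mu_sets] by simp

lemma fm: "(\<lambda>(x, z). f x z) \<in> (\<mu> \<Otimes>\<^sub>M PZ) \<rightarrow>\<^sub>M count_space UNIV"
  using fm0 by (subst measurable_cong_sets[OF sets_pair_measure_cong[OF mu_sets refl] refl])

lemma f_meas[measurable (raw)]:
  assumes "a \<in> M \<rightarrow>\<^sub>M \<mu>" "b \<in> M \<rightarrow>\<^sub>M PZ"
  shows "(\<lambda>\<omega>. f (a \<omega>) (b \<omega>)) \<in> M \<rightarrow>\<^sub>M count_space UNIV"
  using measurable_compose[OF measurable_Pair[OF assms] fm] by simp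

lemma g_meas[measurable (raw)]:
  assumes "a \<in> M \<rightarrow>\<^sub>M count_space UNIV" "b \<in> M \<rightarrow>\<^sub>M PZ"
  shows "(\<lambda>\<omega>. g (a \<omega>) (b \<omega>)) \<in> M \<rightarrow>\<^sub>M borel"
  using measurable_compose[OF measurable_Pair[OF assms] gm0] by simp

declare mu_sets[measurable_cong]

definition p :: "'z \<Rightarrow> nat \<Rightarrow> real" where "p z m = measure \<mu> {x. f x z = m}"

lemma p_meas1: "(\<lambda>z. p z m) \<in> borel_measurable PZ"
proof -
  define Q where "Q = {\<omega> \<in> space (\<mu> \<Otimes>\<^sub>M PZ). f (fst \<omega>) (snd \<omega>) = m}"
  have "Q \<in> sets (\<mu> \<Otimes>\<^sub>M PZ)" unfolding Q_def by measurable
  from MP.measurable_emeasure_Pair2[OF this]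
  have "(\<lambda>z. enn2real (emeasure \<mu> ((\<lambda>x. (x, z)) -` Q))) \<in> borel_measurable PZ" by measurable
  then show ?thesis
    by (rule measurable_cong[THEN iffD1, rotated])
       (auto simp: p_def Q_def space_pair_measure measure_def)
qed

lemma p_meas[measurable (raw)]:
  assumes "a \<in> M \<rightarrow>\<^sub>M count_space UNIV" "b \<in> M \<rightarrow>\<^sub>M PZ"
  shows "(\<lambda>\<omega>. p (b \<omega>) (a \<omega>)) \<in> borel_measurable M"
  by (rule measurable_compose_countable[OF _ assms(1)])
     (rule measurable_compose[OF assms(2) p_meas1])

lemma sec_sets: "z \<in> space PZ \<Longrightarrow> {x. f x z = m} \<in> sets \<mu>"
proof -
  assume z: "z \<in> space PZ"
  have "(\<lambda>x. f x z) \<in> \<mu> \<rightarrow>\<^sub>M count_space UNIV" using z by measurable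
  then have "(\<lambda>x. f x z) -` {m} \<inter> space \<mu> \<in> sets \<mu>" by (rule measurable_sets) simp
  then show ?thesis by (simp add: vimage_def)
qed

abbreviation K :: "'a \<Rightarrow> 'b measure" where "K \<equiv> Kc PZ f g"
lemma K_def: "K x = distr PZ borel (\<lambda>z. g (f x z) z)" by (simp add: Kc_def)

lemma PZ_subprob: "PZ \<in> space (subprob_algebra PZ)"
  by (simp add: space_subprob_algebra P.subprob_space_axioms)

lemma K_kernel: "stoch_kernel K"
  unfolding stoch_kernel_def
proof (rule measurable_prob_algebraI)
  show "prob_space (K x)" for x unfolding K_def by (rule P.prob_space_distr) measurable
  have "(\<lambda>x. distr ((\<lambda>_. PZ) x) borel (\<lambda>z. g (f x z) z)) \<in> borel \<rightarrow>\<^sub>M subprob_algebra borel"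
  proof (rule measurable_distr2[where M=PZ])
    show "(\<lambda>(x, z). g (f x z) z) \<in> borel_measurable (borel \<Otimes>\<^sub>M PZ)" by measurable
    show "(\<lambda>x. PZ) \<in> borel \<rightarrow>\<^sub>M subprob_algebra PZ" by (rule measurable_const[OF PZ_subprob])
  qed
  then show "K \<in> borel \<rightarrow>\<^sub>M subprob_algebra borel" unfolding K_def by simp
qed

lemma joint: "joint_law \<mu> K = code_joint \<mu> PZ f g"
proof -
  define J where "J x = distr PZ (borel \<Otimes>\<^sub>M borel) (\<lambda>z. (x, g (f x z) z))" for x
  have JK: "distr (K x) (borel \<Otimes>\<^sub>M borel) (\<lambda>y. (x,y)) = J x" for x
    unfolding K_def J_def by (subst distr_distr) (auto simp: comp_def)
  have Jm: "J \<in> \<mu> \<rightarrow>\<^sub>M subprob_algebra (borel \<Otimes>\<^sub>M borel)"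
    unfolding J_def
  proof (rule measurable_distr2[where M=PZ])
    show "(\<lambda>(x, z). (x, g (f x z) z)) \<in> (\<mu> \<Otimes>\<^sub>M PZ) \<rightarrow>\<^sub>M (borel \<Otimes>\<^sub>M borel)" by measurable
    show "(\<lambda>x. PZ) \<in> \<mu> \<rightarrow>\<^sub>M subprob_algebra PZ" by (rule measurable_const[OF PZ_subprob])
  qed
  have "joint_law \<mu> K = \<mu> \<bind> J" unfolding joint_law_def using JK by simp
  also have "\<dots> = code_joint \<mu> PZ f g"
  proof (rule measure_eqI)
    have sb: "sets (\<mu> \<bind> J) = sets (borel \<Otimes>\<^sub>M borel)"
      by (rule sets_bind) (auto simp: J_def)
    then show "sets (\<mu> \<bind> J) = sets (code_joint \<mu> PZ f g)" by (simp add: code_joint_def)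
    fix A assume "A \<in> sets (\<mu> \<bind> J)"
    then have A[measurable]: "A \<in> sets (borel \<Otimes>\<^sub>M borel)" using sb by simp
    define H where "H = (\<lambda>(x,z). (x, g (f x z) z)) -` A \<inter> space (\<mu> \<Otimes>\<^sub>M PZ)"
    have H: "H \<in> sets (\<mu> \<Otimes>\<^sub>M PZ)" unfolding H_def by measurable
    have "emeasure (\<mu> \<bind> J) A = (\<integral>\<^sup>+x. emeasure (J x) A \<partial>\<mu>)"
      by (rule emeasure_bind[OF _ Jm A]) simp
    also have "\<dots> = (\<integral>\<^sup>+x. emeasure PZ (Pair x -` H) \<partial>\<mu>)"
    proof (intro nn_integral_cong)
      fix x
      have "(\<lambda>z. (x, g (f x z) z)) -` A \<inter> space PZ = Pair x -` H"
        by (auto simp: H_def space_pair_measure)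
      then show "emeasure (J x) A = emeasure PZ (Pair x -` H)"
        unfolding J_def by (subst emeasure_distr) auto
    qed
    also have "\<dots> = emeasure (\<mu> \<Otimes>\<^sub>M PZ) H"
      by (rule P.emeasure_pair_measure_alt[OF H, symmetric])
    also have "\<dots> = emeasure (code_joint \<mu> PZ f g) A"
      unfolding code_joint_def H_def by (subst emeasure_distr) auto
    finally show "emeasure (\<mu> \<bind> J) A = emeasure (code_joint \<mu> PZ f g) A" .
  qed
  finally show ?thesis .
qed

definition Q :: "('a \<times> ('a \<times> 'z)) measure" where "Q = \<mu> \<Otimes>\<^sub>M (\<mu> \<Otimes>\<^sub>M PZ)"
definition T :: "'a \<times> ('a \<times> 'z) \<Rightarrow> 'a \<times> 'b" where "T = (\<lambda>(x', (x, z)). (x', g (f x z) z))"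
definition s :: "'a \<times> ('a \<times> 'z) \<Rightarrow> real" where
  "s = (\<lambda>(x', (x, z)). if f x' z = f x z then 1 / p z (f x z) else 0)"

lemma T_meas[measurable]: "T \<in> Q \<rightarrow>\<^sub>M (borel \<Otimes>\<^sub>M borel)"
  unfolding T_def Q_def by measurable

lemma s_meas[measurable]: "s \<in> borel_measurable Q"
proof -
  define h where "h m1 m2 \<omega> = (if m1 = m2 then 1 / p (snd (snd \<omega>)) m2 else 0)"
    for m1 m2 :: nat and \<omega> :: "'a \<times> ('a \<times> 'z)"
  have h: "h m1 m2 \<in> borel_measurable Q" for m1 m2
    unfolding h_def Q_def by (cases "m1 = m2") auto
  have F1: "(\<lambda>\<omega>. f (fst \<omega>) (snd (snd \<omega>))) \<in> Q \<rightarrow>\<^sub>M count_space UNIV"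
    unfolding Q_def by measurable
  have F2: "(\<lambda>\<omega>. f (fst (snd \<omega>)) (snd (snd \<omega>))) \<in> Q \<rightarrow>\<^sub>M count_space UNIV"
    unfolding Q_def by measurable
  have "(\<lambda>\<omega>. h m1 (f (fst (snd \<omega>)) (snd (snd \<omega>))) \<omega>) \<in> borel_measurable Q" for m1
    by (rule measurable_compose_countable[OF h F2])
  then have "(\<lambda>\<omega>. h (f (fst \<omega>) (snd (snd \<omega>))) (f (fst (snd \<omega>)) (snd (snd \<omega>))) \<omega>) \<in> borel_measurable Q"
    by (rule measurable_compose_countable[OF _ F1])
  moreover have "(\<lambda>\<omega>. h (f (fst \<omega>) (snd (snd \<omega>))) (f (fst (snd \<omega>)) (snd (snd \<omega>))) \<omega>) = s"
    by (auto simp: h_def s_def)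
  ultimately show ?thesis by simp
qed

lemma s_nonneg: "0 \<le> s \<omega>"
  by (auto simp: s_def p_def split: prod.splits)

lemma nu_eq: "distr (code_joint \<mu> PZ f g) borel snd = distr (\<mu> \<Otimes>\<^sub>M PZ) borel (\<lambda>(x, z). g (f x z) z)"
  unfolding code_joint_def by (subst distr_distr) (auto simp: comp_def split_beta')

lemma QT: "distr Q (borel \<Otimes>\<^sub>M borel) T = \<mu> \<Otimes>\<^sub>M distr (code_joint \<mu> PZ f g) borel snd"
proof -
  have sf: "sigma_finite_measure (distr (\<mu> \<Otimes>\<^sub>M PZ) borel (\<lambda>(x, z). g (f x z) z))"
  proof -
    interpret MPp: prob_space "\<mu> \<Otimes>\<^sub>M PZ" by (rule MP_prob)
    have "prob_space (distr (\<mu> \<Otimes>\<^sub>M PZ) borel (\<lambda>(x, z). g (f x z) z))"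
      by (rule MPp.prob_space_distr) measurable
    then show ?thesis by (simp add: prob_space_imp_sigma_finite)
  qed
  have "distr \<mu> borel (\<lambda>x. x) \<Otimes>\<^sub>M distr (\<mu> \<Otimes>\<^sub>M PZ) borel (\<lambda>(x, z). g (f x z) z)
      = distr (\<mu> \<Otimes>\<^sub>M (\<mu> \<Otimes>\<^sub>M PZ)) (borel \<Otimes>\<^sub>M borel) (\<lambda>(x, y). (x, (\<lambda>(x, z). g (f x z) z) y))"
    by (rule pair_measure_distr[OF _ _ sf]) measurable
  moreover have "distr \<mu> borel (\<lambda>x. x) = \<mu>" by (rule distr_id2) (simp add: mu_sets)
  moreover have "(\<lambda>(x, y). (x, (\<lambda>(x, z). g (f x z) z) y)) = T" by (auto simp: T_def)
  ultimately show ?thesis by (simp add: nu_eq Q_def)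
qed

lemma emeasure_sec: "z \<in> space PZ \<Longrightarrow> emeasure \<mu> {x. f x z = m} = ennreal (p z m)"
  by (simp add: p_def M.emeasure_eq_measure)

lemma AE_pos: "z \<in> space PZ \<Longrightarrow> AE x' in \<mu>. p z (f x' z) \<noteq> 0"
proof -
  assume z: "z \<in> space PZ"
  have "(\<Union>m\<in>{m. p z m = 0}. {x. f x z = m}) \<in> null_sets \<mu>"
    by (intro null_sets_UN') (auto simp: null_sets_def sec_sets[OF z] emeasure_sec[OF z])
  then show ?thesis by (rule AE_I') auto
qed

lemma inner_C:
  assumes z: "z \<in> space PZ"
  shows "(\<integral>\<^sup>+x. ennreal (s (x', (x, z))) * indicator A (x', g (f x z) z) \<partial>\<mu>)
     = indicator A (x', g (f x' z) z) * (if p z (f x' z) = 0 then 0 else 1)"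
proof -
  have "(\<integral>\<^sup>+x. ennreal (s (x', (x, z))) * indicator A (x', g (f x z) z) \<partial>\<mu>)
     = (\<integral>\<^sup>+x. (indicator A (x', g (f x' z) z) * ennreal (1 / p z (f x' z))) * indicator {x. f x z = f x' z} x \<partial>\<mu>)"
    by (intro nn_integral_cong) (auto simp: s_def indicator_def)
  also have "\<dots> = indicator A (x', g (f x' z) z) * ennreal (1 / p z (f x' z)) * ennreal (p z (f x' z))"
    by (simp add: nn_integral_cmult_indicator sec_sets[OF z] emeasure_sec[OF z])
  also have "\<dots> = indicator A (x', g (f x' z) z) * (if p z (f x' z) = 0 then 0 else 1)"
    by (simp add: mult.assoc ennreal_mult''[symmetric] p_def)
  finally show ?thesis .
qed

lemma C: "distr (density Q (\<lambda>\<omega>. ennreal (s \<omega>))) (borel \<Otimes>\<^sub>M borel) T = code_joint \<mu> PZ f g"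
proof (rule measure_eqI)
  show "sets (distr (density Q (\<lambda>\<omega>. ennreal (s \<omega>))) (borel \<Otimes>\<^sub>M borel) T) = sets (code_joint \<mu> PZ f g)"
    by (simp add: code_joint_def)
  fix A assume "A \<in> sets (distr (density Q (\<lambda>\<omega>. ennreal (s \<omega>))) (borel \<Otimes>\<^sub>M borel) T)"
  then have A[measurable]: "A \<in> sets (borel \<Otimes>\<^sub>M borel)" by simp
  define e where "e z x' = (if p z (f x' z) = 0 then 0 else 1::ennreal)" for z x'
  have em[measurable]: "(\<lambda>(x', z). e z x') \<in> borel_measurable (\<mu> \<Otimes>\<^sub>M PZ)"
    unfolding e_def by measurable
  have "emeasure (distr (density Q (\<lambda>\<omega>. ennreal (s \<omega>))) (borel \<Otimes>\<^sub>M borel) T) A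
      = (\<integral>\<^sup>+\<omega>. indicator A \<omega> \<partial>distr (density Q (\<lambda>\<omega>. ennreal (s \<omega>))) (borel \<Otimes>\<^sub>M borel) T)"
    by simp
  also have "\<dots> = (\<integral>\<^sup>+\<omega>. indicator A (T \<omega>) \<partial>density Q (\<lambda>\<omega>. ennreal (s \<omega>)))"
    by (rule nn_integral_distr) measurable
  also have "\<dots> = (\<integral>\<^sup>+\<omega>. ennreal (s \<omega>) * indicator A (T \<omega>) \<partial>Q)"
    by (rule nn_integral_density) measurable
  also have "\<dots> = (\<integral>\<^sup>+x'. \<integral>\<^sup>+xz. ennreal (s (x', xz)) * indicator A (T (x', xz)) \<partial>(\<mu> \<Otimes>\<^sub>M PZ) \<partial>\<mu>)"
  proof -
    have "(\<lambda>\<omega>. ennreal (s \<omega>) * indicator A (T \<omega>)) \<in> borel_measurable Q" by measurable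
    then show ?thesis
      unfolding Q_def by (rule sigma_finite_measure.nn_integral_fst[OF MP_sf, symmetric])
  qed
  also have "\<dots> = (\<integral>\<^sup>+x'. \<integral>\<^sup>+z. \<integral>\<^sup>+x. ennreal (s (x', (x, z))) * indicator A (x', g (f x z) z) \<partial>\<mu> \<partial>PZ \<partial>\<mu>)"
  proof (intro nn_integral_cong)
    fix x'
    have "(\<lambda>xz. ennreal (s (x', xz)) * indicator A (T (x', xz))) \<in> borel_measurable (\<mu> \<Otimes>\<^sub>M PZ)"
      using measurable_compose[OF measurable_Pair1'[of x' \<mu> "\<mu> \<Otimes>\<^sub>M PZ"]] unfolding Q_def[symmetric]
      by measurable
    from MP.nn_integral_snd[OF this] show "(\<integral>\<^sup>+xz. ennreal (s (x', xz)) * indicator A (T (x', xz)) \<partial>(\<mu> \<Otimes>\<^sub>M PZ))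
       = (\<integral>\<^sup>+z. \<integral>\<^sup>+x. ennreal (s (x', (x, z))) * indicator A (x', g (f x z) z) \<partial>\<mu> \<partial>PZ)"
      by (simp add: T_def)
  qed
  also have "\<dots> = (\<integral>\<^sup>+x'. \<integral>\<^sup>+z. indicator A (x', g (f x' z) z) * e z x' \<partial>PZ \<partial>\<mu>)"
    by (intro nn_integral_cong) (simp add: inner_C e_def)
  also have "\<dots> = (\<integral>\<^sup>+z. \<integral>\<^sup>+x'. indicator A (x', g (f x' z) z) * e z x' \<partial>\<mu> \<partial>PZ)"
    by (rule MP.Fubini'[symmetric]) measurable
  also have "\<dots> = (\<integral>\<^sup>+z. \<integral>\<^sup>+x'. indicator A (x', g (f x' z) z) \<partial>\<mu> \<partial>PZ)"
  proof (rule nn_integral_cong)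
    fix z assume z: "z \<in> space PZ"
    have "AE x' in \<mu>. indicator A (x', g (f x' z) z) * e z x' = indicator A (x', g (f x' z) z)"
      using AE_pos[OF z] by eventually_elim (simp add: e_def)
    then show "(\<integral>\<^sup>+x'. indicator A (x', g (f x' z) z) * e z x' \<partial>\<mu>) = (\<integral>\<^sup>+x'. indicator A (x', g (f x' z) z) \<partial>\<mu>)"
      by (rule nn_integral_cong_AE)
  qed
  also have "\<dots> = (\<integral>\<^sup>+x'. \<integral>\<^sup>+z. indicator A (x', g (f x' z) z) \<partial>PZ \<partial>\<mu>)"
    by (rule MP.Fubini') measurable
  also have "\<dots> = (\<integral>\<^sup>+xz. indicator A (fst xz, g (f (fst xz) (snd xz)) (snd xz)) \<partial>(\<mu> \<Otimes>\<^sub>M PZ))"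
  proof -
    have "(\<lambda>xz. indicator A (fst xz, g (f (fst xz) (snd xz)) (snd xz)) :: ennreal) \<in> borel_measurable (\<mu> \<Otimes>\<^sub>M PZ)"
      by measurable
    from P.nn_integral_fst[OF this] show ?thesis by simp
  qed
  also have "\<dots> = (\<integral>\<^sup>+y. indicator A y \<partial>code_joint \<mu> PZ f g)"
    unfolding code_joint_def by (subst nn_integral_distr) (auto simp: split_beta')
  also have "\<dots> = emeasure (code_joint \<mu> PZ f g) A"
    using A by (simp add: code_joint_def)
  finally show "emeasure (distr (density Q (\<lambda>\<omega>. ennreal (s \<omega>))) (borel \<Otimes>\<^sub>M borel) T) A = emeasure (code_joint \<mu> PZ f g) A" .
qed

definition J :: "'z \<Rightarrow> nat \<Rightarrow> ennreal" where
  "J z m = (\<integral>\<^sup>+x. ennreal (phi (if f x z = m then 1 / p z m else 0)) \<partial>\<mu>)"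

lemma J_p:
  assumes z: "z \<in> space PZ"
  shows "J z m * emeasure \<mu> {x. f x z = m} = ennreal (- p z m * ln (p z m))"
proof -
  define S where "S = {x. f x z = m}"
  have S: "S \<in> sets \<mu>" unfolding S_def by (rule sec_sets[OF z])
  have pS: "emeasure \<mu> S = ennreal (p z m)" unfolding S_def by (rule emeasure_sec[OF z])
  have p0: "0 \<le> p z m" "p z m \<le> 1" by (simp_all add: p_def)
  have "J z m = (\<integral>\<^sup>+x. ennreal (phi (1 / p z m)) * indicator S x + 1 * indicator (space \<mu> - S) x \<partial>\<mu>)"
    unfolding J_def by (intro nn_integral_cong) (auto simp: S_def indicator_def phi_def)
  also have "\<dots> = ennreal (phi (1 / p z m)) * ennreal (p z m) + ennreal (1 - p z m)"
  proof -
    have c: "emeasure \<mu> (space \<mu> - S) = ennreal (1 - p z m)"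
      using M.prob_compl[OF S] S by (simp add: M.emeasure_eq_measure S_def p_def)
    have "space \<mu> - S \<in> sets \<mu>" using S by auto
    then show ?thesis
      using S pS c by (simp add: nn_integral_add nn_integral_cmult_indicator)
  qed
  finally have J: "J z m = ennreal (phi (1 / p z m)) * ennreal (p z m) + ennreal (1 - p z m)" .
  show ?thesis
  proof (cases "p z m = 0")
    case True then show ?thesis by (simp add: S_def[symmetric] pS)
  next
    case False
    then have pp: "0 < p z m" using p0 by simp
    have ph: "0 \<le> phi (1 / p z m)" using pp by (intro phi_nonneg) simp
    have "J z m * emeasure \<mu> {x. f x z = m} = ennreal ((phi (1 / p z m) * p z m + (1 - p z m)) * p z m)"
      using ph p0 by (simp add: J S_def[symmetric] pS ennreal_mult''[symmetric] ennreal_plus[symmetric] del: ennreal_plus)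
    also have "\<dots> = ennreal (- p z m * ln (p z m))" using phi_inv[OF pp] by simp
    finally show ?thesis .
  qed
qed

lemma E: "(\<integral>\<^sup>+\<omega>. ennreal (phi (s \<omega>)) \<partial>Q) = cond_entropy_code \<mu> PZ f"
proof -
  have sm: "(\<lambda>\<omega>. ennreal (phi (s \<omega>))) \<in> borel_measurable Q" by measurable
  have "(\<integral>\<^sup>+\<omega>. ennreal (phi (s \<omega>)) \<partial>Q) = (\<integral>\<^sup>+x'. \<integral>\<^sup>+xz. ennreal (phi (s (x', xz))) \<partial>(\<mu> \<Otimes>\<^sub>M PZ) \<partial>\<mu>)"
    using sm unfolding Q_def by (rule sigma_finite_measure.nn_integral_fst[OF MP_sf, symmetric])
  also have "\<dots> = (\<integral>\<^sup>+x'. \<integral>\<^sup>+z. \<integral>\<^sup>+x. ennreal (phi (s (x', (x, z)))) \<partial>\<mu> \<partial>PZ \<partial>\<mu>)"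
  proof (intro nn_integral_cong)
    fix x'
    have "(\<lambda>xz. ennreal (phi (s (x', xz)))) \<in> borel_measurable (\<mu> \<Otimes>\<^sub>M PZ)"
      using measurable_compose[OF measurable_Pair1'[of x' \<mu> "\<mu> \<Otimes>\<^sub>M PZ"]] sm unfolding Q_def
      by simp
    from MP.nn_integral_snd[OF this] show "(\<integral>\<^sup>+xz. ennreal (phi (s (x', xz))) \<partial>(\<mu> \<Otimes>\<^sub>M PZ))
       = (\<integral>\<^sup>+z. \<integral>\<^sup>+x. ennreal (phi (s (x', (x, z)))) \<partial>\<mu> \<partial>PZ)"
      by simp
  qed
  also have "\<dots> = (\<integral>\<^sup>+z. \<integral>\<^sup>+x'. \<integral>\<^sup>+x. ennreal (phi (s (x', (x, z)))) \<partial>\<mu> \<partial>\<mu> \<partial>PZ)"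
  proof (rule MP.Fubini'[symmetric])
    have "(\<lambda>(xz, x). ennreal (phi (s (fst xz, (x, snd xz))))) \<in> borel_measurable ((\<mu> \<Otimes>\<^sub>M PZ) \<Otimes>\<^sub>M \<mu>)"
    proof -
      have "(\<lambda>(xz, x). (fst xz, (x, snd xz))) \<in> ((\<mu> \<Otimes>\<^sub>M PZ) \<Otimes>\<^sub>M \<mu>) \<rightarrow>\<^sub>M Q"
        unfolding Q_def by measurable
      from measurable_compose[OF this sm] show ?thesis by (simp add: split_beta')
    qed
    from M.borel_measurable_nn_integral[OF this]
    show "(\<lambda>(x', z). \<integral>\<^sup>+x. ennreal (phi (s (x', (x, z)))) \<partial>\<mu>) \<in> borel_measurable (\<mu> \<Otimes>\<^sub>M PZ)"
      by (simp add: split_beta')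
  qed
  also have "\<dots> = (\<integral>\<^sup>+z. \<integral>\<^sup>+x'. J z (f x' z) \<partial>\<mu> \<partial>PZ)"
    by (intro nn_integral_cong) (auto simp: J_def s_def intro!: nn_integral_cong)
  also have "\<dots> = (\<integral>\<^sup>+z. (\<Sum>m. ennreal (- p z m * ln (p z m))) \<partial>PZ)"
  proof (intro nn_integral_cong)
    fix z assume z: "z \<in> space PZ"
    have F: "(\<lambda>x'. f x' z) \<in> \<mu> \<rightarrow>\<^sub>M count_space UNIV" using z by measurable
    show "(\<integral>\<^sup>+x'. J z (f x' z) \<partial>\<mu>) = (\<Sum>m. ennreal (- p z m * ln (p z m)))"
      by (simp add: nn_integral_nat_valued[OF F] vimage_def J_p[OF z])
  qed
  also have "\<dots> = cond_entropy_code \<mu> PZ f"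
    unfolding cond_entropy_code_def disc_entropy_def
  proof (intro nn_integral_cong suminf_cong)
    fix z m assume z: "z \<in> space PZ"
    have F: "(\<lambda>x'. f x' z) \<in> \<mu> \<rightarrow>\<^sub>M count_space UNIV" using z by measurable
    have "measure (distr \<mu> (count_space UNIV) (\<lambda>x. f x z)) {m} = p z m"
      by (subst measure_distr[OF F]) (auto simp: p_def vimage_def)
    then show "ennreal (- p z m * ln (p z m)) = ennreal (- measure (distr \<mu> (count_space UNIV) (\<lambda>x. f x z)) {m} *
                 ln (measure (distr \<mu> (count_space UNIV) (\<lambda>x. f x z)) {m}))" by simp
  qed
  finally show ?thesis .
qed

lemma mi_bound: "mutual_info \<mu> K \<le> enn2ereal (cond_entropy_code \<mu> PZ f)"
proof -
  have Qp: "prob_space Q" unfolding Q_def by (rule prob_space_pair[OF mu MP_prob])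
  have "(\<integral>\<^sup>+\<omega>. ennreal (s \<omega>) \<partial>Q) = emeasure (density Q (\<lambda>\<omega>. ennreal (s \<omega>))) (space Q)"
    by (simp add: emeasure_density)
  also have "\<dots> = emeasure (distr (density Q (\<lambda>\<omega>. ennreal (s \<omega>))) (borel \<Otimes>\<^sub>M borel) T) (space (borel \<Otimes>\<^sub>M borel))"
  proof -
    have "T -` space (borel \<Otimes>\<^sub>M borel) \<inter> space Q = space Q" using measurable_space[OF T_meas] by auto
    then show ?thesis by (simp add: emeasure_distr)
  qed
  also have "\<dots> = emeasure (code_joint \<mu> PZ f g) (space (code_joint \<mu> PZ f g))"
    by (simp add: C code_joint_def)
  also have "\<dots> = 1"
  proof -
    have "prob_space (code_joint \<mu> PZ f g)" unfolding code_joint_def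
      by (rule prob_space.prob_space_distr[OF MP_prob]) measurable
    then show ?thesis by (simp add: prob_space.emeasure_space_1)
  qed
  finally have sfin: "(\<integral>\<^sup>+\<omega>. ennreal (s \<omega>) \<partial>Q) \<noteq> \<infinity>" by simp
  have "mutual_info \<mu> K = KL_div (distr (density Q (\<lambda>\<omega>. ennreal (s \<omega>))) (borel \<Otimes>\<^sub>M borel) T) (distr Q (borel \<Otimes>\<^sub>M borel) T)"
    unfolding mutual_info_def joint C QT ..
  also have "\<dots> \<le> enn2ereal (\<integral>\<^sup>+\<omega>. ennreal (phi (s \<omega>)) \<partial>Q)"
    by (rule dpi[OF Qp T_meas s_meas s_nonneg sfin])
  also have "\<dots> = enn2ereal (cond_entropy_code \<mu> PZ f)" by (simp add: E)
  finally show ?thesis .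
qed

end




theorem theorem4:
  fixes S :: "'a::polish_space measure set"
    and M :: nat
    and h :: "nat \<Rightarrow> ('a \<times> 'b::polish_space) measure \<Rightarrow> real"
    and \<theta> :: "nat \<Rightarrow> real"
    and R :: real
    and PZ :: "'z measure"
    and f :: "'a \<Rightarrow> 'z \<Rightarrow> nat"
    and g :: "nat \<Rightarrow> 'z \<Rightarrow> 'b"
  assumes "finite S"
    and "\<forall>\<mu>\<in>S. prob_on \<mu>"
    and "robust_achievable_via S M h \<theta> R PZ f g"
  shows "robust_rate S M h \<theta> \<le> ereal R"
proof -
  from assms(3) have PZ: "prob_space PZ"
    and fm0: "(\<lambda>(x, z). f x z) \<in> (borel \<Otimes>\<^sub>M PZ) \<rightarrow>\<^sub>M count_space UNIV"
    and gm0: "(\<lambda>(m, z). g m z) \<in> (count_space UNIV \<Otimes>\<^sub>M PZ) \<rightarrow>\<^sub>M borel"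
    and H: "\<forall>\<mu>\<in>S. enn2ereal (cond_entropy_code \<mu> PZ f) \<le> ereal R \<and> (\<forall>i<M. h i (code_joint \<mu> PZ f g) \<le> \<theta> i)"
    unfolding robust_achievable_via_def by auto
  have loc: "cs \<mu> PZ f g" if "\<mu> \<in> S" for \<mu>
    using assms(2) that PZ fm0 gm0 unfolding prob_on_def cs_def by auto
  have kern: "stoch_kernel (Kc PZ f g :: 'a \<Rightarrow> 'b measure)"
  proof -
    have c0: "cs (return borel undefined :: 'a measure) PZ f g"
      unfolding cs_def using PZ fm0 gm0 by (simp add: prob_space_return)
    interpret c0: cs "return borel undefined :: 'a measure" PZ f g by (rule c0)
    show ?thesis by (rule c0.K_kernel)
  qed
  have Kin: "Kc PZ f g \<in> (constr_set S M h \<theta> :: ('a \<Rightarrow> 'b measure) set)"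
  proof -
    have "\<forall>\<mu>\<in>S. \<forall>i<M. h i (joint_law \<mu> (Kc PZ f g)) \<le> \<theta> i"
    proof (intro ballI allI impI)
      fix \<mu> i assume \<mu>: "\<mu> \<in> S" and i: "i < M"
      have "joint_law \<mu> (Kc PZ f g) = code_joint \<mu> PZ f g" by (rule cs.joint[OF loc[OF \<mu>]])
      then show "h i (joint_law \<mu> (Kc PZ f g)) \<le> \<theta> i" using H \<mu> i by simp
    qed
    then show ?thesis unfolding constr_set_def using kern by simp
  qed
  have "robust_rate S M h \<theta> \<le> (SUP \<mu>\<in>S. mutual_info \<mu> (Kc PZ f g))"
    unfolding robust_rate_def by (rule INF_lower[OF Kin])
  also have "\<dots> \<le> ereal R"
  proof (rule SUP_least)
    fix \<mu> assume \<mu>: "\<mu> \<in> S"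
    interpret cs \<mu> PZ f g by (rule loc[OF \<mu>])
    have "enn2ereal (cond_entropy_code \<mu> PZ f) \<le> ereal R" using H \<mu> by simp
    with mi_bound show "mutual_info \<mu> (Kc PZ f g) \<le> ereal R" by (rule order_trans)
  qed
  finally show ?thesis .
qed


end
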